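(* Let $\mathcal{A}=\{f\in C^\infty(]0,1[,]0,1[)\mid \lim_{x\to1}f(x)=1,\ \lim_{x\to0}f(x)=0\}$ and $\mathcal{D}=\{f\in\mathcal{A}\mid \inf_{x\in]0,1[}f'(x)>0 \text{ and } \sup_{x\in]0,1[}f'(x)>0\}$, a group under composition, equipped with the Fr\"olicher (diffeological) structure induced from the Fr\'echet space $C^\infty(]0,1[,\mathbb{R})$. Then there exists a smooth path $v$ in $T_{\mathrm{id}}\mathcal{D}$ such that no smooth path $g$ in $\mathcal{D}$ satisfies $\partial_t g\circ g^{-1}=v$.
   Context: $C^\infty(]0,1[,\mathbb{R})$ carries the Fr\'echet topology of the seminorms $\|f\|_{n,k}=\sup_{\frac{1}{n+1}\le x\le\frac{n}{n+1}}|f^{(k)}(x)|$. The smooth maps into $\mathcal{D}$ (plots) are those that are smooth into $C^\infty(]0,1[,\mathbb{R})$ with values in $\mathcal{D}$. $T_{\mathrm{id}}\mathcal{D}$ is the tangent space at the identity, i.e. the set of derivatives at $0$ of smooth paths in $\mathcal{D}$ through $\mathrm{id}$; it is a subset of $C^\infty(]0,1[,\mathbb{R})$. *)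

theory Defs
  imports "HOL-Analysis.Analysis" "HOL-Library.Extended_Real"
begin

abbreviation I01 :: "real set" where "I01 \<equiv> {0<..<1}"

text \<open>Elements of C^infinity(]0,1[,R): real functions all of whose iterated derivatives
  exist on ]0,1[ (values outside ]0,1[ are irrelevant).\<close>
definition smooth01 :: "(real \<Rightarrow> real) \<Rightarrow> bool" where
  "smooth01 f \<longleftrightarrow> (\<forall>k. \<forall>x\<in>I01. ((deriv ^^ k) f) differentiable (at x))"

text \<open>The compact subintervals defining the seminorms
  ||f||_{n,k} = sup over [1/(n+1), n/(n+1)] of |f^(k)|.\<close>
definition K :: "nat \<Rightarrow> real set" where
  "K n = {1 / real (n+1) .. real n / real (n+1)}"

definition frechet_tendsto ::
  "(real \<Rightarrow> real \<Rightarrow> real) \<Rightarrow> (real \<Rightarrow> real) \<Rightarrow> bool" where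
  "frechet_tendsto F G \<longleftrightarrow>
     (\<forall>n k. \<forall>\<epsilon>>0. \<forall>\<^sub>F h in at 0.
        \<forall>x\<in>K n. \<bar>(deriv ^^ k) (F h) x - (deriv ^^ k) G x\<bar> < \<epsilon>)"

definition curve_deriv ::
  "(real \<Rightarrow> real \<Rightarrow> real) \<Rightarrow> (real \<Rightarrow> real) \<Rightarrow> real \<Rightarrow> bool" where
  "curve_deriv c d t \<longleftrightarrow> smooth01 d \<and>
     frechet_tendsto (\<lambda>h x. (c (t + h) x - c t x) / h) d"

definition smooth_curve :: "(real \<Rightarrow> real \<Rightarrow> real) \<Rightarrow> bool" where
  "smooth_curve c \<longleftrightarrow> (\<exists>D :: nat \<Rightarrow> real \<Rightarrow> real \<Rightarrow> real.
     D 0 = c \<and> (\<forall>j t. smooth01 (D j t)) \<and> (\<forall>j t. curve_deriv (D j) (D (Suc j) t) t))"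

definition A_set :: "(real \<Rightarrow> real) set" where
  "A_set = {f. smooth01 f \<and> f ` I01 \<subseteq> I01 \<and>
               (f \<longlongrightarrow> 1) (at_left 1) \<and> (f \<longlongrightarrow> 0) (at_right 0)}"

definition D_set :: "(real \<Rightarrow> real) set" where
  "D_set = {f \<in> A_set. (INF x\<in>I01. ereal (deriv f x)) > 0 \<and>
                        (SUP x\<in>I01. ereal (deriv f x)) > 0}"

definition smooth_path_D :: "(real \<Rightarrow> real \<Rightarrow> real) \<Rightarrow> bool" where
  "smooth_path_D c \<longleftrightarrow> smooth_curve c \<and> (\<forall>t. c t \<in> D_set)"

definition TidD :: "(real \<Rightarrow> real) set" where
  "TidD = {v. \<exists>c. smooth_path_D c \<and> (\<forall>x\<in>I01. c 0 x = x) \<and> curve_deriv c v 0}"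

end

theory Submission
  imports Defs
begin


datatype sx = Cn real | Tv | Xv | Rv | Ad sx sx | Mu sx sx

fun ev :: "sx \<Rightarrow> real \<Rightarrow> real \<Rightarrow> real" where
  "ev (Cn c) t x = c"
| "ev Tv t x = t"
| "ev Xv t x = x"
| "ev Rv t x = inverse (sqrt (1 - x + t^2))"
| "ev (Ad a b) t x = ev a t x + ev b t x"
| "ev (Mu a b) t x = ev a t x * ev b t x"

primrec dT :: "sx \<Rightarrow> sx" where
  "dT (Cn c) = Cn 0"
| "dT Tv = Cn 1"
| "dT Xv = Cn 0"
| "dT Rv = Mu (Mu (Cn (-1)) Tv) (Mu Rv (Mu Rv Rv))"
| "dT (Ad a b) = Ad (dT a) (dT b)"
| "dT (Mu a b) = Ad (Mu (dT a) b) (Mu a (dT b))"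

primrec dX :: "sx \<Rightarrow> sx" where
  "dX (Cn c) = Cn 0"
| "dX Tv = Cn 0"
| "dX Xv = Cn 1"
| "dX Rv = Mu (Cn (1/2)) (Mu Rv (Mu Rv Rv))"
| "dX (Ad a b) = Ad (dX a) (dX b)"
| "dX (Mu a b) = Ad (Mu (dX a) b) (Mu a (dX b))"

lemma R_dT:
  assumes "x < (1::real)"
  shows "((\<lambda>t. inverse (sqrt (1 - x + t^2))) has_real_derivative
          (-1 * t) * (inverse (sqrt (1 - x + t^2)) * (inverse (sqrt (1 - x + t^2)) * inverse (sqrt (1 - x + t^2))))) (at t)"
proof -
  have q: "1 - x + t^2 > 0" using assms by (simp add: add_pos_nonneg)
  have s: "sqrt (1 - x + t^2) > 0" using q by simp
  show ?thesis
    apply (rule derivative_eq_intros refl | use q s in simp)+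
    done
qed

lemma R_dX:
  assumes "x < (1::real)"
  shows "((\<lambda>x. inverse (sqrt (1 - x + t^2))) has_real_derivative
          (1/2) * (inverse (sqrt (1 - x + t^2)) * (inverse (sqrt (1 - x + t^2)) * inverse (sqrt (1 - x + t^2))))) (at x)"
proof -
  have q: "1 - x + t^2 > 0" using assms by (simp add: add_pos_nonneg)
  have s: "sqrt (1 - x + t^2) > 0" using q by simp
  show ?thesis
    apply (rule derivative_eq_intros refl | use q s in simp)+
    done
qed

lemma ev_dT: "x < 1 \<Longrightarrow> ((\<lambda>t. ev e t x) has_real_derivative ev (dT e) t x) (at t)"
proof (induction e)
  case Rv then show ?case using R_dT[of x t] by simp
next
  case (Ad a b) then show ?case by (auto intro!: derivative_eq_intros)
next
  case (Mu a b) then show ?case by (auto intro!: derivative_eq_intros)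
qed auto

lemma ev_dX: "x < 1 \<Longrightarrow> ((\<lambda>x. ev e t x) has_real_derivative ev (dX e) t x) (at x)"
proof (induction e)
  case Rv then show ?case using R_dX[of x t] by simp
next
  case (Ad a b) then show ?case by (auto intro!: derivative_eq_intros)
next
  case (Mu a b) then show ?case by (auto intro!: derivative_eq_intros)
next
  case (Cn c)
  have "ev (Cn c) t = (\<lambda>x. c)" by (rule ext) simp
  then show ?case by simp
next
  case Tv
  have "ev Tv t = (\<lambda>x. t)" by (rule ext) simp
  then show ?case by simp
next
  case Xv
  have "ev Xv t = (\<lambda>x. x)" by (rule ext) simp
  then show ?case by simp
qed

lemma ev_comm: "ev (dX (dT e)) t x = ev (dT (dX e)) t x"
  by (induction e) (simp_all add: algebra_simps)

lemma ev_cont: "continuous_on (UNIV \<times> I01) (\<lambda>p. ev e (fst p) (snd p))"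
proof (induction e)
  case Rv
  have "\<And>p. p \<in> UNIV \<times> I01 \<Longrightarrow> 1 - snd p + (fst p)^2 > 0"
    by (auto simp: add_pos_nonneg)
  then show ?case
    apply (auto intro!: continuous_intros)
    by (metis less_irrefl)
next
  case (Ad a b) then show ?case by (auto intro!: continuous_intros)
next
  case (Mu a b) then show ?case by (auto intro!: continuous_intros)
qed (auto intro!: continuous_intros)

lemma ev_dT_cong:
  assumes "\<And>t x. x \<in> I01 \<Longrightarrow> ev a t x = ev b t x" "x \<in> I01"
  shows "ev (dT a) t x = ev (dT b) t x"
proof -
  have x1: "x < 1" using assms(2) by simp
  have "(\<lambda>t. ev a t x) = (\<lambda>t. ev b t x)" using assms by auto
  then show ?thesis using ev_dT[OF x1, of a t] ev_dT[OF x1, of b t] DERIV_unique by metis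
qed

lemma ev_dX_pow: "x \<in> I01 \<Longrightarrow> ev (dX ((dT^^j) e)) t x = ev ((dT^^j) (dX e)) t x"
proof (induction j arbitrary: t x)
  case 0 then show ?case by simp
next
  case (Suc j)
  have "ev (dX ((dT^^Suc j) e)) t x = ev (dT (dX ((dT^^j) e))) t x" by (simp add: ev_comm)
  also have "\<dots> = ev (dT ((dT^^j) (dX e))) t x"
    by (rule ev_dT_cong[OF Suc.IH Suc.prems])
  finally show ?case by simp
qed



lemma deriv_iter:
  assumes "\<And>k x. x \<in> I01 \<Longrightarrow> (fk k has_real_derivative fk (Suc k) x) (at x)"
  shows "x \<in> I01 \<Longrightarrow> (deriv^^k) (fk 0) x = fk k x"
proof (induction k arbitrary: x)
  case 0 then show ?case by simp
next
  case (Suc k)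
  have "((deriv^^k) (fk 0) has_real_derivative fk (Suc k) x) (at x)"
    by (rule has_field_derivative_transform_within_open[OF assms[OF Suc.prems], of I01])
       (use Suc in auto)
  then show ?case by (simp add: DERIV_imp_deriv)
qed

lemma deriv_iter_diff:
  assumes "\<And>k x. x \<in> I01 \<Longrightarrow> (fk k has_real_derivative fk (Suc k) x) (at x)"
  shows "x \<in> I01 \<Longrightarrow> ((deriv^^k) (fk 0)) differentiable (at x)"
proof -
  assume x: "x \<in> I01"
  have "((deriv^^k) (fk 0) has_real_derivative fk (Suc k) x) (at x)"
    by (rule has_field_derivative_transform_within_open[OF assms[OF x], of I01])
       (use x deriv_iter[where fk=fk, OF assms] in auto)
  then show ?thesis using real_differentiable_def by blast
qed

lemma K_sub: "K n \<subseteq> I01"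
proof
  fix x assume "x \<in> K n"
  then have a: "1 / real (n+1) \<le> x" "x \<le> real n / real (n+1)" by (auto simp: K_def)
  have "0 < 1 / real (n+1)" by simp
  moreover have "real n / real (n+1) < 1" by (simp add: field_simps)
  ultimately have "0 < x" "x < 1" using a by linarith+
  then show "x \<in> I01" by simp
qed

lemma mvt_any:
  fixes f f' :: "real \<Rightarrow> real"
  assumes "\<And>s. DERIV f s :> f' s" "h \<noteq> 0"
  shows "\<exists>z. \<bar>z - t\<bar> < \<bar>h\<bar> \<and> f (t+h) - f t = h * f' z"
proof (cases "h > 0")
  case True
  from MVT2[of t "t+h" f f'] assms True obtain z where "t < z" "z < t+h" "f (t+h) - f t = (t + h - t) * f' z"
    by auto
  then show ?thesis using True by (intro exI[of _ z]) auto
next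
  case False
  then have h: "h < 0" using assms(2) by auto
  from MVT2[of "t+h" t f f'] assms h obtain z where "t+h < z" "z < t" "f t - f (t+h) = (t - (t + h)) * f' z"
    by auto
  then show ?thesis using h by (intro exI[of _ z]) (auto simp: algebra_simps)
qed

lemma smooth_family:
  fixes F :: "nat \<Rightarrow> nat \<Rightarrow> real \<Rightarrow> real \<Rightarrow> real"
  assumes dx: "\<And>j k t x. x \<in> I01 \<Longrightarrow> ((\<lambda>x. F j k t x) has_real_derivative F j (Suc k) t x) (at x)"
    and dt: "\<And>j k t x. x \<in> I01 \<Longrightarrow> ((\<lambda>t. F j k t x) has_real_derivative F (Suc j) k t x) (at t)"
    and ct: "\<And>j k. continuous_on (UNIV \<times> I01) (\<lambda>p. F j k (fst p) (snd p))"
  shows "smooth01 (F j 0 t)" "curve_deriv (F j 0) (F (Suc j) 0 t) t"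
proof -
  have dx': "\<And>k x. x \<in> I01 \<Longrightarrow> ((\<lambda>k. F j k t) k has_real_derivative (\<lambda>k. F j k t) (Suc k) x) (at x)"
    using dx by simp
  show sm: "smooth01 (F j 0 t)" for j t
    unfolding smooth01_def using deriv_iter_diff[of "\<lambda>k. F j k t", OF dx] by auto
  show "curve_deriv (F j 0) (F (Suc j) 0 t) t"
    unfolding curve_deriv_def frechet_tendsto_def
  proof (intro conjI sm allI impI)
    fix n k and e :: real assume e: "e > 0"
    define S where "S = cball t 1 \<times> K n"
    have cS: "compact S" unfolding S_def K_def by (intro compact_Times compact_cball compact_Icc)
    have SS: "S \<subseteq> UNIV \<times> I01" unfolding S_def using K_sub by auto
    have "uniformly_continuous_on S (\<lambda>p. F (Suc j) k (fst p) (snd p))"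
      by (rule compact_uniformly_continuous[OF continuous_on_subset[OF ct SS] cS])
    then obtain d where d: "d > 0" and
      dd: "\<And>p q. p \<in> S \<Longrightarrow> q \<in> S \<Longrightarrow> dist q p < d \<Longrightarrow>
             dist (F (Suc j) k (fst q) (snd q)) (F (Suc j) k (fst p) (snd p)) < e"
      unfolding uniformly_continuous_on_def using e by metis
    show "\<forall>\<^sub>F h in at 0. \<forall>x\<in>K n. \<bar>(deriv ^^ k) (\<lambda>x. (F j 0 (t + h) x - F j 0 t x) / h) x -
              (deriv ^^ k) (F (Suc j) 0 t) x\<bar> < e"
      unfolding eventually_at
    proof (intro exI[of _ "min d 1"] conjI ballI impI)
      show "0 < min d 1" using d by simp
      fix h :: real and x assume "h \<in> UNIV" and h: "h \<noteq> 0 \<and> dist h 0 < min d 1" and x: "x \<in> K n"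
      have xI: "x \<in> I01" using x K_sub[of n] by blast
      have dq: "\<And>k x. x \<in> I01 \<Longrightarrow> ((\<lambda>x. (F j k (t + h) x - F j k t x) / h) has_real_derivative
                  (F j (Suc k) (t + h) x - F j (Suc k) t x) / h) (at x)"
        using h by (auto intro!: derivative_eq_intros dx)
      have e1: "(deriv ^^ k) (\<lambda>x. (F j 0 (t + h) x - F j 0 t x) / h) x = (F j k (t + h) x - F j k t x) / h"
        using deriv_iter[of "\<lambda>k x. (F j k (t + h) x - F j k t x) / h", OF dq xI] by simp
      have e2: "(deriv ^^ k) (F (Suc j) 0 t) x = F (Suc j) k t x"
        using deriv_iter[of "\<lambda>k. F (Suc j) k t", OF _ xI] dx by auto
      obtain z where z: "\<bar>z - t\<bar> < \<bar>h\<bar>" "F j k (t+h) x - F j k t x = h * F (Suc j) k z x"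
        using mvt_any[of "\<lambda>s. F j k s x" "\<lambda>s. F (Suc j) k s x" h t] dt[OF xI] h by auto
      have "(F j k (t + h) x - F j k t x) / h = F (Suc j) k z x" using z h by simp
      moreover have "(z, x) \<in> S" "(t, x) \<in> S" using z h x unfolding S_def by (auto simp: dist_real_def)
      moreover have "dist (z, x) (t, x) < d" using z h by (simp add: dist_Pair_Pair dist_real_def)
      ultimately have "dist (F (Suc j) k z x) (F (Suc j) k t x) < e" using dd[of "(t,x)" "(z,x)"] by auto
      then show "\<bar>(deriv ^^ k) (\<lambda>x. (F j 0 (t + h) x - F j 0 t x) / h) x -
              (deriv ^^ k) (F (Suc j) 0 t) x\<bar> < e"
        using e1 e2 \<open>(F j k (t + h) x - F j k t x) / h = F (Suc j) k z x\<close> by (simp add: dist_real_def)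
    qed
  qed
qed

lemma smooth_family_curve:
  fixes F :: "nat \<Rightarrow> nat \<Rightarrow> real \<Rightarrow> real \<Rightarrow> real"
  assumes dx: "\<And>j k t x. x \<in> I01 \<Longrightarrow> ((\<lambda>x. F j k t x) has_real_derivative F j (Suc k) t x) (at x)"
    and dt: "\<And>j k t x. x \<in> I01 \<Longrightarrow> ((\<lambda>t. F j k t x) has_real_derivative F (Suc j) k t x) (at t)"
    and ct: "\<And>j k. continuous_on (UNIV \<times> I01) (\<lambda>p. F j k (fst p) (snd p))"
  shows "smooth_curve (F 0 0)"
  unfolding smooth_curve_def
  by (rule exI[of _ "\<lambda>j. F j 0"]) (use smooth_family[where F=F, OF dx dt ct] in auto)



definition Pe :: sx where
  "Pe = Ad Xv (Mu (Cn (1/4)) (Mu Tv (Mu Xv (Mu (Ad (Cn 1) (Mu (Cn (-1)) Xv)) Rv))))"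

definition FF :: "nat \<Rightarrow> nat \<Rightarrow> real \<Rightarrow> real \<Rightarrow> real" where
  "FF j k t x = ev ((dT^^j) ((dX^^k) Pe)) t x"

lemma FF_dx: "x \<in> I01 \<Longrightarrow> ((\<lambda>x. FF j k t x) has_real_derivative FF j (Suc k) t x) (at x)"
  unfolding FF_def using ev_dX[of x "(dT^^j) ((dX^^k) Pe)" t] ev_dX_pow[of x j "(dX^^k) Pe" t]
  by simp

lemma FF_dt: "x \<in> I01 \<Longrightarrow> ((\<lambda>t. FF j k t x) has_real_derivative FF (Suc j) k t x) (at t)"
  unfolding FF_def using ev_dT[of x "(dT^^j) ((dX^^k) Pe)" t] by simp

lemma FF_ct: "continuous_on (UNIV \<times> I01) (\<lambda>p. FF j k (fst p) (snd p))"
  unfolding FF_def by (rule ev_cont)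

lemmas FF_fam = smooth_family[where F=FF, OF FF_dx FF_dt FF_ct]
lemmas FF_curve = smooth_family_curve[where F=FF, OF FF_dx FF_dt FF_ct]

lemma FF00: "FF 0 0 t x = x + 1/4 * (t * (x * ((1 - x) * inverse (sqrt (1 - x + t^2)))))"
  by (simp add: FF_def Pe_def)

lemma FF01: "FF 0 1 t x = 1 + 1/4 * (t * ((1 - x) * inverse (sqrt (1 - x + t^2)) + x * (- inverse (sqrt (1 - x + t^2)) + (1 - x) * (1/2 * (inverse (sqrt (1 - x + t^2)))^3))))"
  by (simp add: FF_def Pe_def algebra_simps power3_eq_cube)

lemma FF10: "FF 1 0 0 x = 1/4 * (x * ((1 - x) * inverse (sqrt (1 - x))))"
  by (simp add: FF_def Pe_def)

lemma Rfacts: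
  assumes x: "x \<in> I01"
  shows "inverse (sqrt (1 - x + t^2)) > 0" "\<bar>t\<bar> * inverse (sqrt (1 - x + t^2)) \<le> 1"
    "(1 - x) * (inverse (sqrt (1 - x + t^2)))^2 \<le> 1"
proof -
  define R where "R = inverse (sqrt (1 - x + t^2))"
  have q: "1 - x + t^2 > 0" using x by (simp add: add_pos_nonneg)
  then have s: "sqrt (1 - x + t^2) > 0" by simp
  then show "inverse (sqrt (1 - x + t^2)) > 0" by simp
  have "t^2 \<le> 1 - x + t^2" using x by simp
  then have "sqrt (t^2) \<le> sqrt (1 - x + t^2)" by (rule real_sqrt_le_mono)
  then have "\<bar>t\<bar> \<le> sqrt (1 - x + t^2)" by simp
  then show "\<bar>t\<bar> * inverse (sqrt (1 - x + t^2)) \<le> 1" using s by (simp add: field_simps)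
  have "R^2 = inverse (1 - x + t^2)" unfolding R_def using q
    by (simp add: power_inverse)
  then have "(1 - x) * R^2 = (1 - x) / (1 - x + t^2)" by (simp add: divide_inverse)
  also have "\<dots> \<le> 1" using q by (simp add: pos_divide_le_eq)
  finally show "(1 - x) * (inverse (sqrt (1 - x + t^2)))^2 \<le> 1" unfolding R_def .
qed

lemma FF01_ge: assumes x: "x \<in> I01" shows "FF 0 1 t x \<ge> 3/4"
proof -
  define R where "R = inverse (sqrt (1 - x + t^2))"
  note f = Rfacts[OF x, of t, folded R_def]
  have e: "FF 0 1 t x = 1 + 1/4 * ((t * R) * ((1 - 2*x) + x * ((1 - x) * R^2) / 2))"
    unfolding FF01 R_def[symmetric] by (simp add: algebra_simps power2_eq_square power3_eq_cube)
  define b where "b = (1 - x) * R^2"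
  have b: "0 \<le> b" "b \<le> 1" using f x unfolding b_def by auto
  have xb: "x * b \<ge> 0" "x * b \<le> x" using b x by (auto simp: mult_left_le)
  have m: "\<bar>(1 - 2*x) + x * b / 2\<bar> \<le> 1" using xb x by (auto simp: abs_le_iff)
  have "\<bar>(t * R) * ((1 - 2*x) + x * b / 2)\<bar> \<le> 1"
    using mult_mono[OF f(2) m] f(1) by (simp add: abs_mult)
  then show ?thesis unfolding e b_def[symmetric] by (simp add: abs_le_iff)
qed

lemma FF00_in: assumes x: "x \<in> I01" shows "FF 0 0 t x \<in> I01"
proof -
  define R where "R = inverse (sqrt (1 - x + t^2))"
  note f = Rfacts[OF x, of t, folded R_def]
  have a1: "\<bar>t * (1 - x) * R\<bar> \<le> 1"
  proof -
    have "\<bar>t * (1 - x) * R\<bar> = (\<bar>t\<bar> * R) * (1 - x)" using f x by (simp add: abs_mult)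
    also have "\<dots> \<le> 1 * 1" using f x by (intro mult_mono) auto
    finally show ?thesis by simp
  qed
  have a2: "\<bar>t * x * R\<bar> \<le> 1"
  proof -
    have "\<bar>t * x * R\<bar> = (\<bar>t\<bar> * R) * x" using f x by (simp add: abs_mult)
    also have "\<dots> \<le> 1 * 1" using f x by (intro mult_mono) auto
    finally show ?thesis by simp
  qed
  have e1: "FF 0 0 t x = x * (1 + (t * (1 - x) * R) / 4)" unfolding FF00 R_def[symmetric] by (simp add: field_simps)
  have e2: "1 - FF 0 0 t x = (1 - x) * (1 - (t * x * R) / 4)" unfolding FF00 R_def[symmetric] by algebra
  have "1 + (t * (1 - x) * R) / 4 > 0" using a1 by (simp add: abs_le_iff)
  then have p1: "FF 0 0 t x > 0" unfolding e1 using x by simp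
  have "1 - (t * x * R) / 4 > 0" using a2 by (simp add: abs_le_iff)
  then have "1 - FF 0 0 t x > 0" unfolding e2 using x by simp
  then show ?thesis using p1 by simp
qed

lemma FF00_fun: "FF 0 0 t = (\<lambda>x. x + 1/4 * (t * (x * ((1 - x) * inverse (sqrt (1 - x + t^2))))))"
  by (rule ext) (simp add: FF00)

lemma FF_deriv: "x \<in> I01 \<Longrightarrow> deriv (FF 0 0 t) x = FF 0 1 t x"
  using DERIV_imp_deriv[OF FF_dx[of x 0 0 t]] by simp

lemma c_D: "FF 0 0 t \<in> D_set"
proof -
  have sm: "smooth01 (FF 0 0 t)" by (rule FF_fam(1))
  have im: "FF 0 0 t ` I01 \<subseteq> I01" using FF00_in by auto
  have l0: "(FF 0 0 t \<longlongrightarrow> 0) (at_right 0)"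
  proof -
    have "1 - 0 + t^2 > 0" by (simp add: add_pos_nonneg)
    then have "((\<lambda>x. x + 1/4 * (t * (x * ((1 - x) * inverse (sqrt (1 - x + t^2)))))) \<longlongrightarrow>
          0 + 1/4 * (t * (0 * ((1 - 0) * inverse (sqrt (1 - 0 + t^2)))))) (at_right 0)"
      by (intro tendsto_intros) auto
    then show ?thesis unfolding FF00_fun by simp
  qed
  have l1: "(FF 0 0 t \<longlongrightarrow> 1) (at_left 1)"
  proof (cases "t = 0")
    case True
    then show ?thesis unfolding FF00_fun by (simp add: tendsto_ident_at)
  next
    case False
    then have "1 - 1 + t^2 > 0" by simp
    then have "((\<lambda>x. x + 1/4 * (t * (x * ((1 - x) * inverse (sqrt (1 - x + t^2)))))) \<longlongrightarrow>
          1 + 1/4 * (t * (1 * ((1 - 1) * inverse (sqrt (1 - 1 + t^2)))))) (at_left 1)"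
      by (intro tendsto_intros) auto
    then show ?thesis unfolding FF00_fun by simp
  qed
  have "ereal (3/4) \<le> (INF x\<in>I01. ereal (deriv (FF 0 0 t) x))"
  proof (rule INF_greatest)
    fix x :: real assume x: "x \<in> I01"
    show "ereal (3/4) \<le> ereal (deriv (FF 0 0 t) x)" using FF_deriv[OF x] FF01_ge[OF x] by simp
  qed
  then have inf: "(INF x\<in>I01. ereal (deriv (FF 0 0 t) x)) > 0"
    by (metis ereal_less(2) order_less_le_trans zero_less_divide_iff zero_less_numeral)
  have h: "(1/2::real) \<in> I01" by simp
  have "ereal (deriv (FF 0 0 t) (1/2)) \<le> (SUP x\<in>I01. ereal (deriv (FF 0 0 t) x))"
    by (rule SUP_upper[OF h])
  moreover have "deriv (FF 0 0 t) (1/2) \<ge> 3/4" using FF_deriv[OF h] FF01_ge[OF h] by simp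
  ultimately have sup: "(SUP x\<in>I01. ereal (deriv (FF 0 0 t) x)) > 0"
    by (metis ereal_less(2) ereal_less_eq(3) order_less_le_trans order_trans zero_less_divide_iff zero_less_numeral)
  show ?thesis unfolding D_set_def A_set_def using sm im l0 l1 inf sup by auto
qed



lemma deriv_zero_iter: "(deriv^^k) (\<lambda>x. 0::real) = (\<lambda>x. 0)"
proof (induction k)
  case (Suc k)
  have "deriv (\<lambda>x. 0::real) = (\<lambda>x. 0)" by (rule ext, rule DERIV_imp_deriv) simp
  then show ?case using Suc by simp
qed simp

lemma smooth01_zero: "smooth01 (\<lambda>x. 0)"
  unfolding smooth01_def deriv_zero_iter by simp

lemma frechet_zero: "frechet_tendsto (\<lambda>h x. 0) (\<lambda>x. 0)"
  unfolding frechet_tendsto_def deriv_zero_iter by simp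

lemma const_curve: "smooth01 w \<Longrightarrow> smooth_curve (\<lambda>t. w)"
  unfolding smooth_curve_def
proof (intro exI[of _ "\<lambda>j. if j = 0 then (\<lambda>t. w) else (\<lambda>t x. 0)"] conjI allI)
  assume w: "smooth01 w"
  fix j :: nat and t :: real
  show "smooth01 ((if j = 0 then \<lambda>t. w else (\<lambda>t x. 0)) t)" using w smooth01_zero by auto
  show "curve_deriv (if j = 0 then \<lambda>t. w else (\<lambda>t x. 0)) ((if Suc j = 0 then \<lambda>t. w else (\<lambda>t x. 0)) t) t"
    unfolding curve_deriv_def using smooth01_zero frechet_zero by auto
qed simp

lemma w_TidD: "FF 1 0 0 \<in> TidD"
  unfolding TidD_def smooth_path_D_def
  by (rule CollectI, rule exI[of _ "FF 0 0"]) (use FF_curve c_D FF_fam(2)[of 0 0] in \<open>auto simp: FF00\<close>)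

lemma w_pos: "y \<in> I01 \<Longrightarrow> FF 1 0 0 y > 0"
  unfolding FF10 by simp

lemma D_props:
  assumes "f \<in> D_set" "x \<in> I01"
  shows "DERIV f x :> deriv f x" "deriv f x > 0" "f x \<in> I01"
proof -
  have "smooth01 f" using assms unfolding D_set_def A_set_def by auto
  then have "((deriv^^0) f) differentiable (at x)" using assms(2) unfolding smooth01_def by blast
  then show "DERIV f x :> deriv f x" using DERIV_deriv_iff_real_differentiable by simp
  have "(INF x\<in>I01. ereal (deriv f x)) > 0" using assms unfolding D_set_def by auto
  moreover have "(INF x\<in>I01. ereal (deriv f x)) \<le> ereal (deriv f x)" by (rule INF_lower[OF assms(2)])
  ultimately have "0 < ereal (deriv f x)" by (rule order_less_le_trans)
  then show "deriv f x > 0" by simp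
  have "f ` I01 \<subseteq> I01" using assms unfolding D_set_def A_set_def by auto
  then show "f x \<in> I01" using assms(2) by blast
qed

lemma D_inj:
  assumes "f \<in> D_set"
  shows "inj_on f I01"
proof -
  have mono: "f a < f b" if "a \<in> I01" "b \<in> I01" "a < b" for a b
  proof (rule DERIV_pos_imp_increasing[OF \<open>a < b\<close>])
    fix x assume "a \<le> x" "x \<le> b"
    then have "x \<in> I01" using that by auto
    then show "\<exists>y. DERIV f x :> y \<and> y > 0" using D_props[OF assms] by blast
  qed
  show ?thesis unfolding inj_on_def
    by (metis linorder_neq_iff mono less_irrefl)
qed

lemma point_deriv:
  assumes "curve_deriv g d t"
  shows "((\<lambda>t. g t (1/2)) has_real_derivative d (1/2)) (at t)"
proof -
  have k: "(1/2::real) \<in> K 1" by (simp add: K_def)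
  have "\<forall>e>0. \<forall>\<^sub>F h in at 0. \<bar>(g (t + h) (1/2) - g t (1/2)) / h - d (1/2)\<bar> < e"
  proof (intro allI impI)
    fix e :: real assume "e > 0"
    with assms have "\<forall>\<^sub>F h in at 0. \<forall>x\<in>K 1. \<bar>(deriv ^^ 0) (\<lambda>x. (g (t + h) x - g t x) / h) x - (deriv ^^ 0) d x\<bar> < e"
      unfolding curve_deriv_def frechet_tendsto_def by blast
    then show "\<forall>\<^sub>F h in at 0. \<bar>(g (t + h) (1/2) - g t (1/2)) / h - d (1/2)\<bar> < e"
      by eventually_elim (use k in auto)
  qed
  then have "((\<lambda>h. (g (t + h) (1/2) - g t (1/2)) / h) \<longlongrightarrow> d (1/2)) (at 0)"
    unfolding tendsto_iff dist_real_def by blast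
  then show ?thesis unfolding DERIV_def by simp
qed



lemma no_flow:
  assumes gD: "\<And>t. g t \<in> D_set"
    and cd: "\<And>t. curve_deriv g (g' t) t"
    and eq: "\<And>t x. x \<in> I01 \<Longrightarrow> g' t (inv_into I01 (g t) x) = FF 1 0 0 x"
  shows False
proof -
  define y where "y t = g t (1/2)" for t
  have h: "(1/2::real) \<in> I01" by simp
  have yI: "y t \<in> I01" for t unfolding y_def using D_props(3)[OF gD h] .
  have g'eq: "g' t (1/2) = FF 1 0 0 (y t)" for t
  proof -
    have "inv_into I01 (g t) (g t (1/2)) = 1/2" by (rule inv_into_f_f[OF D_inj[OF gD] h])
    moreover have "g' t (inv_into I01 (g t) (g t (1/2))) = FF 1 0 0 (g t (1/2))"
      using eq[OF yI[of t]] unfolding y_def .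
    ultimately show ?thesis unfolding y_def by metis
  qed
  have dy: "DERIV y t :> FF 1 0 0 (y t)" for t
    using point_deriv[OF cd[of t]] g'eq[of t] unfolding y_def by simp
  define y0 where "y0 = y 0"
  have y0: "0 < y0" "y0 < 1" using yI[of 0] unfolding y0_def by auto
  have incr: "y0 \<le> y s" if "s \<ge> 0" for s
  proof (cases "s = 0")
    case True then show ?thesis unfolding y0_def by simp
  next
    case False
    then have "0 < s" using that by simp
    from MVT2[OF this, of y "\<lambda>t. FF 1 0 0 (y t)"] dy obtain z where
      "y s - y 0 = (s - 0) * FF 1 0 0 (y z)" by blast
    moreover have "FF 1 0 0 (y z) > 0" using w_pos[OF yI[of z]] .
    ultimately show ?thesis using \<open>0 < s\<close> unfolding y0_def
      by (metis diff_ge_0_iff_ge diff_zero less_eq_real_def mult_pos_pos)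
  qed
  define L where "L t = - 2 * sqrt (1 - y t) - y0 / 4 * t" for t
  have dL: "DERIV L t :> (y t - y0) / 4" for t
  proof -
    have u: "1 - y t > 0" using yI[of t] by simp
    have s: "sqrt (1 - y t) * sqrt (1 - y t) = 1 - y t" using u by simp
    have sp: "sqrt (1 - y t) > 0" using u by simp
    have key: "inverse (sqrt (1 - y t)) * FF 1 0 0 (y t) = y t / 4"
    proof -
      have "inverse (sqrt (1 - y t)) * FF 1 0 0 (y t) =
            1/4 * (y t * ((1 - y t) * inverse (sqrt (1 - y t) * sqrt (1 - y t))))"
        unfolding FF10 by (simp add: field_simps)
      also have "\<dots> = y t / 4" using s u by simp
      finally show ?thesis .
    qed
    have d0: "DERIV (\<lambda>s. 1 - y s) t :> 0 - FF 1 0 0 (y t)"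
      by (intro DERIV_diff DERIV_const dy)
    have d1: "DERIV (\<lambda>s. sqrt (1 - y s)) t :> inverse (sqrt (1 - y t)) / 2 * (0 - FF 1 0 0 (y t))"
      by (rule DERIV_chain2[OF DERIV_real_sqrt[OF u] d0])
    have d2: "DERIV L t :> - 2 * (inverse (sqrt (1 - y t)) / 2 * (0 - FF 1 0 0 (y t))) - y0 / 4 * 1"
      unfolding L_def[abs_def]
      by (intro DERIV_diff DERIV_cmult d1 DERIV_ident)
    have eqn: "- 2 * (inverse (sqrt (1 - y t)) / 2 * (0 - FF 1 0 0 (y t))) - y0 / 4 * 1 = (y t - y0) / 4"
      using key by (simp add: field_simps)
    show ?thesis using d2 unfolding eqn .
  qed
  define T where "T = 16 / y0"
  have T: "0 < T" unfolding T_def using y0 by simp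
  from MVT2[OF T, of L "\<lambda>t. (y t - y0) / 4"] dL obtain z where
    z: "0 < z" "L T - L 0 = (T - 0) * ((y z - y0) / 4)" by blast
  have "(y z - y0) / 4 \<ge> 0" using incr[of z] z(1) by simp
  then have "L T \<ge> L 0" using z T by (metis diff_ge_0_iff_ge diff_zero mult_nonneg_nonneg less_eq_real_def)
  moreover have "L 0 \<ge> -2" unfolding L_def y0_def[symmetric] using y0
    by (simp add: real_sqrt_le_1_iff)
  moreover have "y0 / 4 * T = 4" unfolding T_def using y0 by simp
  moreover have "sqrt (1 - y T) \<ge> 0" using yI[of T] by simp
  ultimately show False unfolding L_def by linarith
qed

theorem theorem8p4:
  shows "\<exists>v. smooth_curve v \<and> (\<forall>t. v t \<in> TidD) \<and>
           \<not> (\<exists>g g'. smooth_path_D g \<and> (\<forall>t. curve_deriv g (g' t) t) \<and>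
                 (\<forall>t. \<forall>x\<in>I01. g' t (inv_into I01 (g t) x) = v t x))"
proof (intro exI[of _ "\<lambda>t. FF 1 0 0"] conjI allI notI)
  show "smooth_curve (\<lambda>t. FF 1 0 0)" by (rule const_curve[OF FF_fam(1)])
  show "FF 1 0 0 \<in> TidD" for t by (rule w_TidD)
  assume "\<exists>g g'. smooth_path_D g \<and> (\<forall>t. curve_deriv g (g' t) t) \<and>
                 (\<forall>t. \<forall>x\<in>I01. g' t (inv_into I01 (g t) x) = FF 1 0 0 x)"
  then obtain g g' where "smooth_path_D g" "\<forall>t. curve_deriv g (g' t) t"
    "\<forall>t. \<forall>x\<in>I01. g' t (inv_into I01 (g t) x) = FF 1 0 0 x" by blast
  then show False using no_flow[of g g'] unfolding smooth_path_D_def by blast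
qed

end
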